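(* Let $n\geq1$ and let $F$ be a joint distribution of nonnegative lifetimes $X_1,\ldots,X_n$ with no ties. The following are equivalent: (a) $I_{\mathrm{BP}}^{(j)}=b_j$ for every $j\in[n]$ and every coherent structure function $\phi\in\Phi_n$; (b) the same for every semicoherent $\phi\in\Phi'_n$; (c) $q_j(A)=\frac{1}{n\binom{n-1}{|A|}}$ for every $j\in[n]$ and every $A\subseteq[n]\setminus\{j\}$.
   Context: Subsets of $[n]$ are identified with Boolean vectors. $\Phi'_n$ is the set of semicoherent structure functions $\phi:2^{[n]}\to\{0,1\}$: nondecreasing with $\phi(\varnothing)=0$, $\phi([n])=1$. $\Phi_n\subseteq\Phi'_n$ is the set of coherent ones: every variable is essential, i.e., for each $j$ there is $\mathbf{x}$ with $\phi(\mathbf{x})|_{x_j=0}\neq\phi(\mathbf{x})|_{x_j=1}$. No ties: $\Pr(X_i=X_k)=0$ for $i\neq k$. System lifetime $T=\inf\{t\geq0:\phi(\{i:X_i>t\})=0\}$; $I_{\mathrm{BP}}^{(j)}=\Pr(T=X_j)$ (depending on $\phi$ and $F$). $b_j=\sum_{A\subseteq[n]\setminus\{j\}}\frac{1}{n\binom{n-1}{|A|}}(\phi(A\cup\{j\})-\phi(A))$. $q_j(A)=\Pr\big(\max_{i\notin A\cup\{j\}}X_i<X_j<\min_{i\in A}X_i\big)$ (empty max $=-\infty$, empty min $=+\infty$). *)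

theory Defs
  imports "HOL-Probability.Probability"
begin

text \<open>Components are indexed by [n] = {1..n}; a state vector is identified with the
  set of working components (a subset of {1..n}); a structure function is a
  predicate on such sets (True = 1, False = 0).\<close>

definition semicoherent :: "nat \<Rightarrow> (nat set \<Rightarrow> bool) \<Rightarrow> bool" where
  "semicoherent n \<phi> \<longleftrightarrow>
     (\<forall>A B. A \<subseteq> B \<longrightarrow> B \<subseteq> {1..n} \<longrightarrow> (\<phi> A \<longrightarrow> \<phi> B))
     \<and> \<not> \<phi> {} \<and> \<phi> {1..n}"

definition coherent :: "nat \<Rightarrow> (nat set \<Rightarrow> bool) \<Rightarrow> bool" where
  "coherent n \<phi> \<longleftrightarrow> semicoherent n \<phi> \<and>
     (\<forall>j\<in>{1..n}. \<exists>x. x \<subseteq> {1..n} \<and> \<phi> (x - {j}) \<noteq> \<phi> (x \<union> {j}))"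

definition lifetime :: "nat \<Rightarrow> (nat set \<Rightarrow> bool) \<Rightarrow> (nat \<Rightarrow> 'a \<Rightarrow> real) \<Rightarrow> 'a \<Rightarrow> real" where
  "lifetime n \<phi> X \<omega> = Inf {t. 0 \<le> t \<and> \<not> \<phi> {i\<in>{1..n}. X i \<omega> > t}}"

definition I_BP :: "'a measure \<Rightarrow> nat \<Rightarrow> (nat set \<Rightarrow> bool) \<Rightarrow> (nat \<Rightarrow> 'a \<Rightarrow> real) \<Rightarrow> nat \<Rightarrow> real" where
  "I_BP M n \<phi> X j = measure M {\<omega> \<in> space M. lifetime n \<phi> X \<omega> = X j \<omega>}"

definition b_coef :: "nat \<Rightarrow> (nat set \<Rightarrow> bool) \<Rightarrow> nat \<Rightarrow> real" where
  "b_coef n \<phi> j = (\<Sum>A\<in>Pow ({1..n} - {j}).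
      1 / (real n * real ((n - 1) choose card A)) * (of_bool (\<phi> (A \<union> {j})) - of_bool (\<phi> A)))"

definition q_prob :: "'a measure \<Rightarrow> nat \<Rightarrow> (nat \<Rightarrow> 'a \<Rightarrow> real) \<Rightarrow> nat \<Rightarrow> nat set \<Rightarrow> real" where
  "q_prob M n X j A = measure M {\<omega> \<in> space M.
      (\<forall>i\<in>{1..n} - (A \<union> {j}). X i \<omega> < X j \<omega>) \<and> (\<forall>i\<in>A. X j \<omega> < X i \<omega>)}"

end

theory Submission
  imports Defs
begin

lemma sc_mono: "semicoherent n \<phi> \<Longrightarrow> A \<subseteq> B \<Longrightarrow> B \<subseteq> {1..n} \<Longrightarrow> \<phi> A \<Longrightarrow> \<phi> B"
  unfolding semicoherent_def by blast

definition Vf :: "nat \<Rightarrow> (nat set \<Rightarrow> bool) \<Rightarrow> (nat \<Rightarrow> 'a \<Rightarrow> real) \<Rightarrow> 'a \<Rightarrow> real" where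
  "Vf n \<phi> X \<omega> = Max ((\<lambda>P. Min ((\<lambda>i. X i \<omega>) ` P)) ` {P. P \<subseteq> {1..n} \<and> \<phi> P})"

lemma life_char:
  assumes sc: "semicoherent n \<phi>" and nn: "\<forall>i\<in>{1..n}. 0 \<le> X i \<omega>"
  shows "0 \<le> Vf n \<phi> X \<omega>" and "\<And>t. (\<not> \<phi> {i\<in>{1..n}. X i \<omega> > t}) \<longleftrightarrow> Vf n \<phi> X \<omega> \<le> t"
    and "lifetime n \<phi> X \<omega> = Vf n \<phi> X \<omega>"
proof -
  define Ps where "Ps = {P. P \<subseteq> {1..n} \<and> \<phi> P}"
  have fin: "finite Ps" unfolding Ps_def
    by (rule finite_subset[of _ "Pow {1..n}"]) auto
  have full: "{1..n} \<in> Ps" using sc unfolding Ps_def semicoherent_def by auto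
  have ne: "\<And>P. P \<in> Ps \<Longrightarrow> P \<noteq> {} \<and> finite P" using sc unfolding Ps_def semicoherent_def
    by (auto intro: finite_subset)
  have V: "Vf n \<phi> X \<omega> = Max ((\<lambda>P. Min ((\<lambda>i. X i \<omega>) ` P)) ` Ps)"
    unfolding Vf_def Ps_def ..
  have le: "Vf n \<phi> X \<omega> \<le> t \<longleftrightarrow> (\<forall>P\<in>Ps. \<exists>i\<in>P. X i \<omega> \<le> t)" for t
  proof -
    have "Vf n \<phi> X \<omega> \<le> t \<longleftrightarrow> (\<forall>P\<in>Ps. Min ((\<lambda>i. X i \<omega>) ` P) \<le> t)"
      unfolding V using fin full by (subst Max_le_iff) auto
    also have "\<dots> \<longleftrightarrow> (\<forall>P\<in>Ps. \<exists>i\<in>P. X i \<omega> \<le> t)"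
      using ne by (auto simp: Min_le_iff)
    finally show ?thesis .
  qed
  show eq: "(\<not> \<phi> {i\<in>{1..n}. X i \<omega> > t}) \<longleftrightarrow> Vf n \<phi> X \<omega> \<le> t" for t
  proof
    assume h: "\<not> \<phi> {i\<in>{1..n}. X i \<omega> > t}"
    show "Vf n \<phi> X \<omega> \<le> t" unfolding le
    proof
      fix P assume P: "P \<in> Ps"
      show "\<exists>i\<in>P. X i \<omega> \<le> t"
      proof (rule ccontr)
        assume "\<not> ?thesis"
        hence "P \<subseteq> {i\<in>{1..n}. X i \<omega> > t}" using P unfolding Ps_def by force
        moreover have "\<phi> P" using P unfolding Ps_def by auto
        ultimately show False using h sc_mono[OF sc] by blast
      qed
    qed
  next
    assume "Vf n \<phi> X \<omega> \<le> t"
    hence h: "\<forall>P\<in>Ps. \<exists>i\<in>P. X i \<omega> \<le> t" using le by blast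
    show "\<not> \<phi> {i\<in>{1..n}. X i \<omega> > t}"
    proof
      assume "\<phi> {i\<in>{1..n}. X i \<omega> > t}"
      hence "{i\<in>{1..n}. X i \<omega> > t} \<in> Ps" unfolding Ps_def by auto
      with h show False by force
    qed
  qed
  show nn0: "0 \<le> Vf n \<phi> X \<omega>"
  proof -
    have "Min ((\<lambda>i. X i \<omega>) ` {1..n}) \<le> Vf n \<phi> X \<omega>" unfolding V
      using fin full by (intro Max_ge) auto
    moreover have "0 \<le> Min ((\<lambda>i. X i \<omega>) ` {1..n})" using ne[OF full] nn by simp
    ultimately show ?thesis by linarith
  qed
  have "{t. 0 \<le> t \<and> \<not> \<phi> {i\<in>{1..n}. X i \<omega> > t}} = {Vf n \<phi> X \<omega>..}"
    using eq nn0 by auto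
  thus "lifetime n \<phi> X \<omega> = Vf n \<phi> X \<omega>" unfolding lifetime_def by simp
qed

lemma pt_event:
  assumes sc: "semicoherent n \<phi>" and nn: "\<forall>i\<in>{1..n}. 0 \<le> X i \<omega>"
    and j: "j \<in> {1..n}" and A: "A \<subseteq> {1..n} - {j}"
    and hO: "\<forall>i\<in>{1..n} - (A \<union> {j}). X i \<omega> < X j \<omega>"
    and hA: "\<forall>i\<in>A. X j \<omega> < X i \<omega>"
  shows "lifetime n \<phi> X \<omega> = X j \<omega> \<longleftrightarrow> \<phi> (A \<union> {j}) \<and> \<not> \<phi> A"
proof -
  note lc = life_char[of n \<phi> X \<omega>, OF sc nn]
  define V where "V = Vf n \<phi> X \<omega>"
  have SA: "{i\<in>{1..n}. X i \<omega> > X j \<omega>} = A"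
  proof (intro set_eqI iffI)
    fix i assume "i \<in> {i\<in>{1..n}. X i \<omega> > X j \<omega>}"
    hence i: "i \<in> {1..n}" "X i \<omega> > X j \<omega>" by auto
    show "i \<in> A"
    proof (rule ccontr)
      assume "i \<notin> A"
      moreover have "i \<noteq> j" using i by auto
      ultimately have "i \<in> {1..n} - (A \<union> {j})" using i by auto
      hence "X i \<omega> < X j \<omega>" using hO by blast
      thus False using i(2) by linarith
    qed
  next
    fix i assume "i \<in> A" thus "i \<in> {i\<in>{1..n}. X i \<omega> > X j \<omega>}" using A hA by auto
  qed
  have c1: "V \<le> X j \<omega> \<longleftrightarrow> \<not> \<phi> A" using lc(2)[of "X j \<omega>"] SA V_def by simp
  have c2: "V < X j \<omega> \<longleftrightarrow> \<not> \<phi> (A \<union> {j})"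
  proof
    assume "V < X j \<omega>"
    hence ns: "\<not> \<phi> {i\<in>{1..n}. X i \<omega> > V}" using lc(2)[of V] V_def by simp
    have "A \<union> {j} \<subseteq> {i\<in>{1..n}. X i \<omega> > V}"
    proof
      fix i assume "i \<in> A \<union> {j}"
      thus "i \<in> {i\<in>{1..n}. X i \<omega> > V}" using A j hA \<open>V < X j \<omega>\<close>
        by (cases "i = j") (auto intro: less_trans)
    qed
    thus "\<not> \<phi> (A \<union> {j})" using ns sc_mono[OF sc] by blast
  next
    assume np: "\<not> \<phi> (A \<union> {j})"
    define Oc where "Oc = {1..n} - (A \<union> {j})"
    have "Oc \<noteq> {}"
    proof
      assume "Oc = {}"
      hence "A \<union> {j} = {1..n}" using A j unfolding Oc_def by auto
      thus False using np sc unfolding semicoherent_def by auto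
    qed
    moreover have "finite Oc" unfolding Oc_def by auto
    ultimately have tl: "Max ((\<lambda>i. X i \<omega>) ` Oc) < X j \<omega>" and t0: "0 \<le> Max ((\<lambda>i. X i \<omega>) ` Oc)"
      using hO nn unfolding Oc_def by (auto simp: Max_ge_iff)
    define t where "t = Max ((\<lambda>i. X i \<omega>) ` Oc)"
    have "\<forall>i\<in>Oc. X i \<omega> \<le> t" unfolding t_def using \<open>finite Oc\<close> by auto
    hence "{i\<in>{1..n}. X i \<omega> > t} \<subseteq> A \<union> {j}" unfolding Oc_def
    proof (intro subsetI)
      fix i assume H: "\<forall>i\<in>{1..n} - (A \<union> {j}). X i \<omega> \<le> t" "i \<in> {i\<in>{1..n}. X i \<omega> > t}"
      show "i \<in> A \<union> {j}"
      proof (rule ccontr)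
        assume "i \<notin> A \<union> {j}"
        hence "X i \<omega> \<le> t" using H by auto
        thus False using H by auto
      qed
    qed
    hence "\<not> \<phi> {i\<in>{1..n}. X i \<omega> > t}" using np sc_mono[OF sc] A j by blast
    hence "V \<le> t" using lc(2)[of t] V_def by simp
    thus "V < X j \<omega>" using tl t_def by simp
  qed
  have "lifetime n \<phi> X \<omega> = V" using lc(3) V_def by simp
  thus ?thesis using c1 c2 by auto
qed

lemma key:
  assumes P: "prob_space M"
    and meas: "\<And>i. i \<in> {1..n} \<Longrightarrow> X i \<in> borel_measurable M"
    and nn: "\<And>i \<omega>. i \<in> {1..n} \<Longrightarrow> \<omega> \<in> space M \<Longrightarrow> 0 \<le> X i \<omega>"
    and ties: "\<And>i k. i \<in> {1..n} \<Longrightarrow> k \<in> {1..n} \<Longrightarrow> i \<noteq> k \<Longrightarrow>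
           measure M {\<omega> \<in> space M. X i \<omega> = X k \<omega>} = 0"
    and sc: "semicoherent n \<phi>" and j: "j \<in> {1..n}"
  shows "I_BP M n \<phi> X j = (\<Sum>A\<in>Pow ({1..n} - {j}).
           q_prob M n X j A * (of_bool (\<phi> (A \<union> {j})) - of_bool (\<phi> A)))"
proof -
  interpret prob_space M by (rule P)
  define W where "W = {1..n} - {j}"
  define E where "E A = {\<omega> \<in> space M.
      (\<forall>i\<in>{1..n} - (A \<union> {j}). X i \<omega> < X j \<omega>) \<and> (\<forall>i\<in>A. X j \<omega> < X i \<omega>)}" for A
  define G where "G = {A\<in>Pow W. \<phi> (A \<union> {j}) \<and> \<not> \<phi> A}"
  define TS where "TS = {\<omega> \<in> space M. lifetime n \<phi> X \<omega> = X j \<omega>}"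
  have finW: "finite W" unfolding W_def by auto
  have Emeas: "E A \<in> sets M" if "A \<subseteq> W" for A
    unfolding E_def using that j unfolding W_def
    by (intro sets.sets_Collect_conj sets.sets_Collect_finite_All borel_measurable_less meas)
       (auto intro: finite_subset)
  have Vmeas: "Vf n \<phi> X \<in> borel_measurable M"
  proof -
    have "(\<lambda>\<omega>. Max ((\<lambda>P. Min ((\<lambda>i. X i \<omega>) ` P)) ` {P. P \<subseteq> {1..n} \<and> \<phi> P})) \<in> borel_measurable M"
    proof (rule borel_measurable_Max)
      show "finite {P. P \<subseteq> {1..n} \<and> \<phi> P}"
        by (rule finite_subset[of _ "Pow {1..n}"]) auto
      fix P assume "P \<in> {P. P \<subseteq> {1..n} \<and> \<phi> P}"
      hence PP: "P \<subseteq> {1..n}" by auto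
      show "(\<lambda>\<omega>. Min ((\<lambda>i. X i \<omega>) ` P)) \<in> borel_measurable M"
        using PP by (intro borel_measurable_Min meas) (auto intro: finite_subset)
    qed
    thus ?thesis unfolding Vf_def[abs_def] .
  qed
  have TSeq: "TS = {\<omega> \<in> space M. Vf n \<phi> X \<omega> = X j \<omega>}"
  proof -
    have "lifetime n \<phi> X \<omega> = Vf n \<phi> X \<omega>" if "\<omega> \<in> space M" for \<omega>
      using life_char(3)[of n \<phi> X \<omega>, OF sc] nn that by auto
    thus ?thesis unfolding TS_def by auto
  qed
  have TSmeas: "TS \<in> sets M" unfolding TSeq
    by (intro borel_measurable_eq Vmeas meas j)
  have Euniq: "A = {i\<in>W. X j \<omega> < X i \<omega>}" if "A \<subseteq> W" "\<omega> \<in> E A" for A \<omega>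
  proof (intro set_eqI iffI)
    fix i assume "i \<in> A" thus "i \<in> {i\<in>W. X j \<omega> < X i \<omega>}" using that unfolding E_def by auto
  next
    fix i assume i: "i \<in> {i\<in>W. X j \<omega> < X i \<omega>}"
    show "i \<in> A"
    proof (rule ccontr)
      assume "i \<notin> A"
      hence "i \<in> {1..n} - (A \<union> {j})" using i unfolding W_def by auto
      hence "X i \<omega> < X j \<omega>" using that(2) unfolding E_def by blast
      thus False using i by auto
    qed
  qed
  have AEnt: "AE \<omega> in M. \<forall>i\<in>{1..n}. \<forall>k\<in>{1..n}. i \<noteq> k \<longrightarrow> X i \<omega> \<noteq> X k \<omega>"
  proof (intro AE_finite_allI finite_atLeastAtMost)
    fix i k assume ik: "i \<in> {1..n}" "k \<in> {1..n}"
    show "AE \<omega> in M. i \<noteq> k \<longrightarrow> X i \<omega> \<noteq> X k \<omega>"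
    proof (cases "i = k")
      case True thus ?thesis by simp
    next
      case False
      have Nm: "{\<omega> \<in> space M. X i \<omega> = X k \<omega>} \<in> sets M" using ik by (intro borel_measurable_eq meas)
      have "emeasure M {\<omega> \<in> space M. X i \<omega> = X k \<omega>} = 0"
        using ties[OF ik False] Nm by (simp add: emeasure_eq_measure)
      moreover have "(AE \<omega> in M. X i \<omega> \<noteq> X k \<omega>) \<longleftrightarrow> emeasure M {\<omega> \<in> space M. X i \<omega> = X k \<omega>} = 0"
        by (rule AE_iff_measurable[OF Nm]) auto
      ultimately show ?thesis using False by (auto elim: AE_mp)
    qed
  qed
  have pw: "\<omega> \<in> TS \<longleftrightarrow> \<omega> \<in> (\<Union>A\<in>G. E A)"
    if sp: "\<omega> \<in> space M" and nt: "\<forall>i\<in>{1..n}. \<forall>k\<in>{1..n}. i \<noteq> k \<longrightarrow> X i \<omega> \<noteq> X k \<omega>" for \<omega>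
  proof -
    define A0 where "A0 = {i\<in>W. X j \<omega> < X i \<omega>}"
    have A0W: "A0 \<subseteq> W" unfolding A0_def by auto
    have hO: "\<forall>i\<in>{1..n} - (A0 \<union> {j}). X i \<omega> < X j \<omega>"
    proof
      fix i assume i: "i \<in> {1..n} - (A0 \<union> {j})"
      hence "X i \<omega> \<noteq> X j \<omega>" using nt j by auto
      moreover have "\<not> X j \<omega> < X i \<omega>" using i unfolding A0_def W_def by auto
      ultimately show "X i \<omega> < X j \<omega>" by linarith
    qed
    have hA: "\<forall>i\<in>A0. X j \<omega> < X i \<omega>" unfolding A0_def by auto
    have inE: "\<omega> \<in> E A0" unfolding E_def using sp hO hA by auto
    have nn': "\<forall>i\<in>{1..n}. 0 \<le> X i \<omega>" using nn sp by auto
    have "\<omega> \<in> TS \<longleftrightarrow> \<phi> (A0 \<union> {j}) \<and> \<not> \<phi> A0"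
      unfolding TS_def using pt_event[of n \<phi> X \<omega> j A0, OF sc nn' j _ hO hA] A0W sp unfolding W_def by auto
    also have "\<dots> \<longleftrightarrow> \<omega> \<in> (\<Union>A\<in>G. E A)"
    proof
      assume "\<phi> (A0 \<union> {j}) \<and> \<not> \<phi> A0"
      hence "A0 \<in> G" using A0W unfolding G_def by auto
      thus "\<omega> \<in> (\<Union>A\<in>G. E A)" using inE by auto
    next
      assume "\<omega> \<in> (\<Union>A\<in>G. E A)"
      then obtain A where A: "A \<in> G" "\<omega> \<in> E A" by auto
      have "A = A0" unfolding A0_def using Euniq[of A \<omega>] A unfolding G_def by auto
      thus "\<phi> (A0 \<union> {j}) \<and> \<not> \<phi> A0" using A unfolding G_def by auto
    qed
    finally show "\<omega> \<in> TS \<longleftrightarrow> \<omega> \<in> (\<Union>A\<in>G. E A)" .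
  qed
  have AEeq: "AE \<omega> in M. \<omega> \<in> TS \<longleftrightarrow> \<omega> \<in> (\<Union>A\<in>G. E A)"
    using AEnt AE_space by eventually_elim (rule pw)
  have finG: "finite G" unfolding G_def using finW by auto
  have GW: "\<And>A. A \<in> G \<Longrightarrow> A \<subseteq> W" unfolding G_def by auto
  have Umeas: "(\<Union>A\<in>G. E A) \<in> sets M"
    using finG GW Emeas by (intro sets.finite_UN) auto
  have "I_BP M n \<phi> X j = measure M TS" unfolding I_BP_def TS_def ..
  also have "\<dots> = measure M (\<Union>A\<in>G. E A)"
    by (rule measure_eq_AE[OF AEeq TSmeas Umeas])
  also have "\<dots> = (\<Sum>A\<in>G. measure M (E A))"
  proof (rule measure_finite_Union[OF finG])
    show "E ` G \<subseteq> sets M" using GW Emeas by auto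
    show "disjoint_family_on E G"
      unfolding disjoint_family_on_def
    proof (intro ballI impI)
      fix A B assume AB: "A \<in> G" "B \<in> G" "A \<noteq> B"
      show "E A \<inter> E B = {}"
      proof (rule ccontr)
        assume "E A \<inter> E B \<noteq> {}"
        then obtain \<omega> where "\<omega> \<in> E A" "\<omega> \<in> E B" by auto
        hence "A = B" using Euniq[of A \<omega>] Euniq[of B \<omega>] GW AB by auto
        thus False using AB by auto
      qed
    qed
    show "\<And>i. i \<in> G \<Longrightarrow> emeasure M (E i) \<noteq> \<infinity>" by (simp add: emeasure_eq_measure)
  qed
  also have "\<dots> = (\<Sum>A\<in>Pow W. if \<phi> (A \<union> {j}) \<and> \<not> \<phi> A then measure M (E A) else 0)"
    unfolding G_def using finW by (subst sum.inter_filter) auto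
  also have "\<dots> = (\<Sum>A\<in>Pow W. q_prob M n X j A * (of_bool (\<phi> (A \<union> {j})) - of_bool (\<phi> A)))"
  proof (rule sum.cong[OF refl])
    fix A assume "A \<in> Pow W"
    hence "A \<union> {j} \<subseteq> {1..n}" using j unfolding W_def by auto
    hence "\<phi> A \<Longrightarrow> \<phi> (A \<union> {j})" using sc_mono[OF sc, of A "A \<union> {j}"] by auto
    thus "(if \<phi> (A \<union> {j}) \<and> \<not> \<phi> A then measure M (E A) else 0) =
        q_prob M n X j A * (of_bool (\<phi> (A \<union> {j})) - of_bool (\<phi> A))"
      unfolding q_prob_def E_def by auto
  qed
  finally show ?thesis unfolding W_def .
qed

lemma inversion:
  fixes e :: "nat set \<Rightarrow> real"
  assumes fin: "finite W" and h: "\<And>C. C \<subseteq> W \<Longrightarrow> (\<Sum>A\<in>{A\<in>Pow W. C \<subseteq> A}. e A) = 0"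
  shows "C \<subseteq> W \<Longrightarrow> e C = 0"
proof (induction C rule: measure_induct_rule[where f = "\<lambda>C. card (W - C)"])
  case (less C)
  have split: "{A\<in>Pow W. C \<subseteq> A} = insert C {A\<in>Pow W. C \<subset> A}" using less.prems by auto
  have z: "(\<Sum>A\<in>{A\<in>Pow W. C \<subset> A}. e A) = 0"
  proof (rule sum.neutral, intro ballI)
    fix A assume A: "A \<in> {A\<in>Pow W. C \<subset> A}"
    have "W - A \<subset> W - C" using A less.prems by auto
    hence "card (W - A) < card (W - C)" using fin by (intro psubset_card_mono) auto
    thus "e A = 0" using less.IH A by auto
  qed
  have "finite {A\<in>Pow W. C \<subset> A}" using fin by auto
  hence "(\<Sum>A\<in>{A\<in>Pow W. C \<subseteq> A}. e A) = e C + (\<Sum>A\<in>{A\<in>Pow W. C \<subset> A}. e A)"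
    unfolding split by (subst sum.insert) auto
  thus ?case using h[OF less.prems] z by simp
qed

lemma series_coh: "1 \<le> n \<Longrightarrow> coherent n (\<lambda>x. {1..n} \<subseteq> x)"
  unfolding coherent_def semicoherent_def
proof (intro conjI ballI allI impI)
  fix j assume j: "j \<in> {1..n}"
  show "\<exists>x. x \<subseteq> {1..n} \<and> ({1..n} \<subseteq> x - {j}) \<noteq> ({1..n} \<subseteq> x \<union> {j})"
    using j by (intro exI[of _ "{1..n}"]) auto
qed auto

lemma two_coh:
  assumes "B \<union> R = {1..n}" "B \<inter> R = {}" "B \<noteq> {}" "R \<noteq> {}"
  shows "coherent n (\<lambda>x. B \<subseteq> x \<or> R \<subseteq> x)"
  unfolding coherent_def semicoherent_def
proof (intro conjI ballI allI impI)
  fix j assume j: "j \<in> {1..n}"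
  show "\<exists>x. x \<subseteq> {1..n} \<and> (B \<subseteq> x - {j} \<or> R \<subseteq> x - {j}) \<noteq> (B \<subseteq> x \<union> {j} \<or> R \<subseteq> x \<union> {j})"
  proof (cases "j \<in> B")
    case True
    show ?thesis using True assms by (intro exI[of _ B]) auto
  next
    case False
    hence "j \<in> R" using j assms by auto
    thus ?thesis using assms by (intro exI[of _ R]) auto
  qed
qed (use assms in auto)

theorem proposition9:
  fixes M :: "'a measure" and X :: "nat \<Rightarrow> 'a \<Rightarrow> real" and n :: nat
  assumes "prob_space M"
    and "n \<ge> 1"
    and "\<And>i. i \<in> {1..n} \<Longrightarrow> X i \<in> borel_measurable M"
    and "\<And>i \<omega>. i \<in> {1..n} \<Longrightarrow> \<omega> \<in> space M \<Longrightarrow> 0 \<le> X i \<omega>"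
    and "\<And>i k. i \<in> {1..n} \<Longrightarrow> k \<in> {1..n} \<Longrightarrow> i \<noteq> k \<Longrightarrow>
           measure M {\<omega> \<in> space M. X i \<omega> = X k \<omega>} = 0"
  shows "((\<forall>\<phi>. coherent n \<phi> \<longrightarrow> (\<forall>j\<in>{1..n}. I_BP M n \<phi> X j = b_coef n \<phi> j))
          \<longleftrightarrow> (\<forall>\<phi>. semicoherent n \<phi> \<longrightarrow> (\<forall>j\<in>{1..n}. I_BP M n \<phi> X j = b_coef n \<phi> j)))
       \<and> ((\<forall>\<phi>. semicoherent n \<phi> \<longrightarrow> (\<forall>j\<in>{1..n}. I_BP M n \<phi> X j = b_coef n \<phi> j))
          \<longleftrightarrow> (\<forall>j\<in>{1..n}. \<forall>A. A \<subseteq> {1..n} - {j} \<longrightarrow>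
                 q_prob M n X j A = 1 / (real n * real ((n - 1) choose card A))))"
proof -
  define c where "c A = 1 / (real n * real ((n - 1) choose card A))" for A :: "nat set"
  define D where "D \<phi> j A = (of_bool (\<phi> (A \<union> {j})) - of_bool (\<phi> A) :: real)" for \<phi> :: "nat set \<Rightarrow> bool" and j A
  have bc: "b_coef n \<phi> j = (\<Sum>A\<in>Pow ({1..n} - {j}). c A * D \<phi> j A)" for \<phi> j
    unfolding b_coef_def c_def D_def ..
  have Kd: "I_BP M n \<phi> X j = (\<Sum>A\<in>Pow ({1..n} - {j}). q_prob M n X j A * D \<phi> j A)"
    if "semicoherent n \<phi>" "j \<in> {1..n}" for \<phi> j
    unfolding D_def by (rule key) (use assms that in auto)
  define Ia where "Ia = (\<forall>\<phi>. coherent n \<phi> \<longrightarrow> (\<forall>j\<in>{1..n}. I_BP M n \<phi> X j = b_coef n \<phi> j))"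
  define Ib where "Ib = (\<forall>\<phi>. semicoherent n \<phi> \<longrightarrow> (\<forall>j\<in>{1..n}. I_BP M n \<phi> X j = b_coef n \<phi> j))"
  define Ic where "Ic = (\<forall>j\<in>{1..n}. \<forall>A. A \<subseteq> {1..n} - {j} \<longrightarrow> q_prob M n X j A = c A)"
  have cb: "Ic \<Longrightarrow> Ib" unfolding Ic_def Ib_def
  proof (intro allI impI ballI)
    fix \<phi> j assume H: "\<forall>j\<in>{1..n}. \<forall>A. A \<subseteq> {1..n} - {j} \<longrightarrow> q_prob M n X j A = c A"
      and sc: "semicoherent n \<phi>" and j: "j \<in> {1..n}"
    show "I_BP M n \<phi> X j = b_coef n \<phi> j" unfolding Kd[OF sc j] bc
      using H j by (intro sum.cong) auto
  qed
  have ba: "Ib \<Longrightarrow> Ia" unfolding Ia_def Ib_def coherent_def by blast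
  have ac: "Ia \<Longrightarrow> Ic" unfolding Ic_def
  proof (intro ballI allI impI)
    fix j C assume Ia: Ia and j: "j \<in> {1..n}" and C: "C \<subseteq> {1..n} - {j}"
    define W where "W = {1..n} - {j}"
    define e where "e A = q_prob M n X j A - c A" for A
    have finW: "finite W" unfolding W_def by auto
    have Z: "(\<Sum>A\<in>Pow W. e A * D \<phi> j A) = 0" if coh: "coherent n \<phi>" for \<phi>
    proof -
      have sc: "semicoherent n \<phi>" using coh unfolding coherent_def by auto
      have "I_BP M n \<phi> X j = b_coef n \<phi> j" using Ia coh j unfolding Ia_def by auto
      hence "(\<Sum>A\<in>Pow W. q_prob M n X j A * D \<phi> j A) - (\<Sum>A\<in>Pow W. c A * D \<phi> j A) = 0"
        unfolding Kd[OF sc j] bc W_def by simp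
      thus ?thesis unfolding e_def sum_subtractf[symmetric] by (simp add: left_diff_distrib)
    qed
    have eW: "e W = 0"
    proof -
      have "D (\<lambda>x. {1..n} \<subseteq> x) j A = (if A = W then 1 else 0)" if "A \<in> Pow W" for A
      proof -
        have "\<not> {1..n} \<subseteq> A" using that j unfolding W_def by auto
        moreover have "{1..n} \<subseteq> A \<union> {j} \<longleftrightarrow> A = W" using that j unfolding W_def by auto
        ultimately show ?thesis unfolding D_def by auto
      qed
      hence "(\<Sum>A\<in>Pow W. e A * D (\<lambda>x. {1..n} \<subseteq> x) j A) = (\<Sum>A\<in>Pow W. if A = W then e A else 0)"
        by (intro sum.cong) auto
      also have "\<dots> = e W" using finW by (simp add: sum.delta')
      finally show ?thesis using Z[OF series_coh[OF assms(2)]] by simp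
    qed
    have up: "(\<Sum>A\<in>{A\<in>Pow W. C' \<subseteq> A}. e A) = 0" if C': "C' \<subseteq> W" for C'
    proof (cases "C' = W")
      case True
      hence "{A\<in>Pow W. C' \<subseteq> A} = {W}" by auto
      thus ?thesis using eW by simp
    next
      case False
      define B where "B = insert j C'"
      define R where "R = W - C'"
      have coh: "coherent n (\<lambda>x. B \<subseteq> x \<or> R \<subseteq> x)"
        using C' False j by (intro two_coh) (auto simp: B_def R_def W_def)
      have Dv: "D (\<lambda>x. B \<subseteq> x \<or> R \<subseteq> x) j A = of_bool (C' \<subseteq> A) - (if A = W then 1 else 0)"
        if "A \<in> Pow W" for A
      proof -
        have "\<not> B \<subseteq> A" using that unfolding B_def W_def by auto
        moreover have "B \<subseteq> A \<union> {j} \<longleftrightarrow> C' \<subseteq> A" unfolding B_def using that C' W_def by auto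
        moreover have "R \<subseteq> A \<union> {j} \<longleftrightarrow> R \<subseteq> A" unfolding R_def W_def by auto
        moreover have "C' \<subseteq> A \<and> R \<subseteq> A \<longleftrightarrow> A = W" using that C' unfolding R_def by auto
        moreover have "A = W \<Longrightarrow> C' \<subseteq> A" using C' by auto
        ultimately show ?thesis unfolding D_def by auto
      qed
      have "(\<Sum>A\<in>Pow W. e A * D (\<lambda>x. B \<subseteq> x \<or> R \<subseteq> x) j A)
          = (\<Sum>A\<in>Pow W. (if C' \<subseteq> A then e A else 0) - (if A = W then e A else 0))"
      proof (rule sum.cong[OF refl])
        fix A assume A: "A \<in> Pow W"
        show "e A * D (\<lambda>x. B \<subseteq> x \<or> R \<subseteq> x) j A = (if C' \<subseteq> A then e A else 0) - (if A = W then e A else 0)"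
          unfolding Dv[OF A] by (simp add: right_diff_distrib)
      qed
      also have "\<dots> = (\<Sum>A\<in>{A\<in>Pow W. C' \<subseteq> A}. e A) - e W"
      proof -
        have "(\<Sum>A\<in>Pow W. if C' \<subseteq> A then e A else 0) = (\<Sum>A\<in>{A\<in>Pow W. C' \<subseteq> A}. e A)"
          using finW by (subst sum.inter_filter) auto
        thus ?thesis using finW by (simp add: sum_subtractf sum.delta')
      qed
      finally show ?thesis using Z[OF coh] eW by simp
    qed
    have "e C = 0" using inversion[OF finW up] C unfolding W_def by auto
    thus "q_prob M n X j C = c C" unfolding e_def by simp
  qed
  have "(Ia \<longleftrightarrow> Ib) \<and> (Ib \<longleftrightarrow> Ic)" using ac ba cb by blast
  thus ?thesis unfolding Ia_def Ib_def Ic_def c_def .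
qed

end
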